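(* Let $\xi>0$ and $R>0$. Under Assumption 1 there exists $\gamma_\xi>0$ such that for all $(x,t,p,y)\in\mathbb{R}^{n\times m}_+\times\mathbb{R}^n\times\mathbb{R}^m\times\mathbb{R}^n$ with $\|(x,t,p,y)\|\le R$, $$\|F_\xi(x,t,p,y)\|\ge \gamma_\xi\,\mathrm{dist}\big((x,t,p,y),\mathcal{X}^\star\big).$$
   Context: Fisher market: $n$ buyers, $m$ goods, budgets $w_i>0$, utilities $u_{ij}\ge0$, with Assumption 1: every row and every column of $U=(u_{ij})$ contains a positive entry. $\mathcal{X}^\star$ is the solution set of the KKT system: $t_iy_i-w_i=0$; $x_{ij}(p_j-u_{ij}y_i)=0$; $p_j-u_{ij}y_i\ge0$; $\sum_i x_{ij}=1$; $t_i-\sum_j u_{ij}x_{ij}=0$; $x_{ij}\ge0$ (for all $i\in[n],j\in[m]$). The scaled KKT residual is the vector $F_\xi(x,t,p,y)=\Big((t_iy_i-w_i)_i,\ \big(x_{ij}-[x_{ij}-\tfrac1\xi(p_j-u_{ij}y_i)]_+\big)_{ij},\ ([p_j-u_{ij}y_i]_-)_{ij},\ (\sum_i x_{ij}-1)_j,\ (t_i-\sum_j u_{ij}x_{ij})_i\Big)$, where $[a]_+=\max\{a,0\}$, $[a]_-=\max\{-a,0\}$; norms are Euclidean. *)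

theory Defs
  imports "HOL-Analysis.Analysis"
begin

text \<open>Fisher market with buyers indexed by the finite type 'n and goods by the finite type 'm.  Norms on vectors and products are Euclidean (product norm is
  sqrt of sum of squared norms), so the norm of a point is the Euclidean norm of the
  stacked vector.\<close>

definition pos_part :: "real \<Rightarrow> real" where "pos_part a = max a 0"
definition neg_part :: "real \<Rightarrow> real" where "neg_part a = max (- a) 0"

definition assumption1 :: "real^'m^'n \<Rightarrow> bool" where
  "assumption1 U \<longleftrightarrow> (\<forall>i j. U$i$j \<ge> 0) \<and> (\<forall>i. \<exists>j. U$i$j > 0) \<and> (\<forall>j. \<exists>i. U$i$j > 0)"

definition KKT_set :: "real^'n \<Rightarrow> real^'m^'n \<Rightarrow>
    ((real^'m^'n) \<times> (real^'n) \<times> (real^'m) \<times> (real^'n)) set" where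
  "KKT_set w U = {(x,t,p,y).
      (\<forall>i. t$i * y$i - w$i = 0) \<and>
      (\<forall>i j. x$i$j * (p$j - U$i$j * y$i) = 0) \<and>
      (\<forall>i j. p$j - U$i$j * y$i \<ge> 0) \<and>
      (\<forall>j. (\<Sum>i\<in>UNIV. x$i$j) = 1) \<and>
      (\<forall>i. t$i - (\<Sum>j\<in>UNIV. U$i$j * x$i$j) = 0) \<and>
      (\<forall>i j. x$i$j \<ge> 0)}"

definition F_res :: "real \<Rightarrow> real^'n \<Rightarrow> real^'m^'n \<Rightarrow>
    (real^'m^'n) \<times> (real^'n) \<times> (real^'m) \<times> (real^'n) \<Rightarrow>
    (real^'n) \<times> (real^'m^'n) \<times> (real^'m^'n) \<times> (real^'m) \<times> (real^'n)" where
  "F_res \<xi> w U z = (case z of (x,t,p,y) \<Rightarrow>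
     ((\<chi> i. t$i * y$i - w$i),
      (\<chi> i j. x$i$j - pos_part (x$i$j - (1/\<xi>) * (p$j - U$i$j * y$i))),
      (\<chi> i j. neg_part (p$j - U$i$j * y$i)),
      (\<chi> j. (\<Sum>i\<in>UNIV. x$i$j) - 1),
      (\<chi> i. t$i - (\<Sum>j\<in>UNIV. U$i$j * x$i$j))))"

end

theory Submission
  imports Defs
begin

lemma norm_mat_le: "norm (x::real^'m^'n) \<le> (\<Sum>i\<in>UNIV. \<Sum>j\<in>UNIV. \<bar>x$i$j\<bar>)"
proof -
  have "norm x \<le> (\<Sum>i\<in>UNIV. norm (x$i))"
    unfolding norm_vec_def by (rule L2_set_le_sum) simp
  also have "\<dots> \<le> (\<Sum>i\<in>UNIV. \<Sum>j\<in>UNIV. \<bar>x$i$j\<bar>)"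
    by (rule sum_mono) (rule norm_le_l1_cart)
  finally show ?thesis .
qed

definition orth :: "('n \<times> 'm) set \<Rightarrow> ('n \<times> 'm) set \<Rightarrow> (real^'m^'n) set" where
  "orth Z P = {h. \<forall>i j. ((i,j)\<in>Z \<longrightarrow> h$i$j = 0) \<and> ((i,j)\<in>P \<longrightarrow> h$i$j \<ge> 0) \<and> ((i,j)\<notin>P \<longrightarrow> h$i$j \<le> 0)}"

lemma closed_orth: fixes Z P :: "('n::finite \<times> 'm::finite) set" shows "closed (orth Z P :: (real^'m^'n) set)"
proof -
  have c: "continuous_on UNIV (\<lambda>h::real^'m^'n. h$i$j)" for i j
    by (intro continuous_intros)
  have e: "closed {h::real^'m^'n. (i,j)\<in>Z \<longrightarrow> h$i$j = 0}" for i j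
    by (cases "(i,j)\<in>Z") (auto intro: closed_Collect_eq[OF c continuous_on_const])
  have f: "closed {h::real^'m^'n. (i,j)\<in>P \<longrightarrow> h$i$j \<ge> 0}" for i j
    by (cases "(i,j)\<in>P") (auto intro: closed_Collect_le[OF continuous_on_const c])
  have g: "closed {h::real^'m^'n. (i,j)\<notin>P \<longrightarrow> h$i$j \<le> 0}" for i j
    by (cases "(i,j)\<in>P") (auto intro: closed_Collect_le[OF c continuous_on_const])
  show ?thesis unfolding orth_def
    by (intro closed_Collect_all closed_Collect_conj e f g)
qed

lemma orth_scale: "h \<in> orth Z P \<Longrightarrow> c \<ge> 0 \<Longrightarrow> c *\<^sub>R h \<in> orth Z P"
  unfolding orth_def by (auto simp: mult_nonneg_nonpos)

lemma cone_bound: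
  fixes M :: "real^'m^'n \<Rightarrow> 'b::real_normed_vector"
  assumes lin: "linear M"
  shows "\<exists>e>0. \<forall>Z P h. h \<in> orth Z P \<longrightarrow> (\<forall>v\<in>orth Z P. M v = 0 \<longrightarrow> v = 0) \<longrightarrow> e * norm h \<le> norm (M h)"
proof -
  define C where "C = \<Union>((\<lambda>(Z,P). orth Z P) ` {(Z,P). \<forall>v\<in>orth Z P. M v = 0 \<longrightarrow> v = 0})"
  have clC: "closed C" unfolding C_def
    by (intro closed_Union) (auto intro: closed_orth)
  define S where "S = C \<inter> sphere 0 1"
  have cS: "compact S" unfolding S_def
    by (intro closed_Int_compact clC compact_sphere)
  have Cmem: "h \<in> C" if "h \<in> orth Z P" "\<forall>v\<in>orth Z P. M v = 0 \<longrightarrow> v = 0" for h Z P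
    unfolding C_def using that by blast
  have Cgood: "\<exists>Z P. h \<in> orth Z P \<and> (\<forall>v\<in>orth Z P. M v = 0 \<longrightarrow> v = 0)" if "h \<in> C" for h
    using that unfolding C_def by auto
  have cont: "continuous_on S (\<lambda>h. norm (M h))"
    by (intro continuous_intros linear_continuous_on linear_conv_bounded_linear[THEN iffD1] lin)
  show ?thesis
  proof (cases "S = {}")
    case True
    show ?thesis
    proof (intro exI[of _ 1] conjI allI impI)
      fix Z P h assume h: "h \<in> orth Z P" and g: "\<forall>v\<in>orth Z P. M v = 0 \<longrightarrow> v = 0"
      show "1 * norm h \<le> norm (M h)"
      proof (cases "h = 0")
        case False
        have "(1 / norm h) *\<^sub>R h \<in> S" unfolding S_def
          using Cmem[OF orth_scale[OF h] g] False by auto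
        with True show ?thesis by simp
      qed simp
    qed simp
  next
    case False
    obtain h0 where h0: "h0 \<in> S" and mn: "\<forall>h\<in>S. norm (M h0) \<le> norm (M h)"
      using continuous_attains_inf[OF cS False cont] by blast
    from h0 obtain Z0 P0 where "h0 \<in> orth Z0 P0" "\<forall>v\<in>orth Z0 P0. M v = 0 \<longrightarrow> v = 0"
      unfolding S_def using Cgood by blast
    moreover have "h0 \<noteq> 0" using h0 unfolding S_def by auto
    ultimately have pos: "norm (M h0) > 0" by auto
    show ?thesis
    proof (intro exI[of _ "norm (M h0)"] conjI allI impI pos)
      fix Z P h assume h: "h \<in> orth Z P" and g: "\<forall>v\<in>orth Z P. M v = 0 \<longrightarrow> v = 0"
      show "norm (M h0) * norm h \<le> norm (M h)"
      proof (cases "h = 0")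
        case False
        have "(1 / norm h) *\<^sub>R h \<in> S" unfolding S_def
          using Cmem[OF orth_scale[OF h] g] False by auto
        then have "norm (M h0) \<le> norm (M ((1 / norm h) *\<^sub>R h))" using mn by blast
        also have "\<dots> = norm (M h) / norm h"
          using linear_scale[OF lin] by (simp add: divide_inverse mult.commute)
        finally show ?thesis using False by (simp add: field_simps)
      qed (simp add: linear_0[OF lin])
    qed
  qed
qed

lemma box_step:
  fixes k g h a :: real
  assumes "(0 \<le> k \<and> k \<le> g) \<or> (g \<le> k \<and> k \<le> 0)" "h = g - k" "\<bar>a\<bar> \<le> \<bar>h\<bar>" "a * h \<ge> 0"
  shows "(0 \<le> k + a \<and> k + a \<le> g) \<or> (g \<le> k + a \<and> k + a \<le> 0)"
proof -
  have "(h > 0 \<longrightarrow> a \<ge> 0) \<and> (h < 0 \<longrightarrow> a \<le> 0)"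
    using assms(4) by (auto simp: zero_le_mult_iff)
  then show ?thesis using assms(1-3) by (auto simp: abs_if split: if_splits)
qed

lemma hoffman:
  fixes M :: "real^'m^'n \<Rightarrow> 'b::real_normed_vector"
  assumes lin: "linear M"
  shows "\<exists>\<kappa>>0. \<forall>x x0. (\<forall>i j. x$i$j \<ge> 0) \<longrightarrow> (\<forall>i j. x0$i$j \<ge> 0) \<longrightarrow>
     (\<exists>x'. (\<forall>i j. x'$i$j \<ge> 0) \<and> M x' = M x0 \<and> norm (x - x') \<le> \<kappa> * norm (M x - M x0))"
proof -
  obtain e where e: "e > 0" and eb: "\<And>Z P h. h \<in> orth Z P \<Longrightarrow> (\<forall>v\<in>orth Z P. M v = 0 \<longrightarrow> v = 0) \<Longrightarrow> e * norm h \<le> norm (M h)"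
    using cone_bound[OF lin] by blast
  have bl: "bounded_linear M" using lin linear_conv_bounded_linear by blast
  show ?thesis
  proof (intro exI[of _ "1/e"] conjI allI impI)
    show "1/e > 0" using e by simp
    fix x x0 :: "real^'m^'n"
    assume x: "\<forall>i j. x$i$j \<ge> 0" and x0: "\<forall>i j. x0$i$j \<ge> 0"
    define g where "g = x0 - x"
    define K where "K = {k. M k = 0 \<and> (\<forall>i j. (0 \<le> k$i$j \<and> k$i$j \<le> g$i$j) \<or> (g$i$j \<le> k$i$j \<and> k$i$j \<le> 0))}"
    define f where "f = (\<lambda>k::real^'m^'n. \<Sum>i\<in>UNIV. \<Sum>j\<in>UNIV. k$i$j * sgn (g$i$j))"
    have c: "continuous_on UNIV (\<lambda>h::real^'m^'n. h$i$j)" for i j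
      by (intro continuous_intros)
    have cM: "continuous_on UNIV M" using bl by (intro linear_continuous_on)
    have clK: "closed K" unfolding K_def
      by (intro closed_Collect_conj closed_Collect_all closed_Collect_disj closed_Collect_eq
           closed_Collect_le cM c continuous_on_const)
    have bK: "bounded K"
    proof -
      have "norm k \<le> (\<Sum>i\<in>UNIV. \<Sum>j\<in>UNIV. \<bar>g$i$j\<bar>)" if "k \<in> K" for k
      proof -
        have "norm k \<le> (\<Sum>i\<in>UNIV. \<Sum>j\<in>UNIV. \<bar>k$i$j\<bar>)" by (rule norm_mat_le)
        also have "\<dots> \<le> (\<Sum>i\<in>UNIV. \<Sum>j\<in>UNIV. \<bar>g$i$j\<bar>)"
        proof (intro sum_mono)
          fix i j
          have "(0 \<le> k$i$j \<and> k$i$j \<le> g$i$j) \<or> (g$i$j \<le> k$i$j \<and> k$i$j \<le> 0)"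
            using that unfolding K_def by blast
          then show "\<bar>k$i$j\<bar> \<le> \<bar>g$i$j\<bar>" by auto
        qed
        finally show ?thesis .
      qed
      then show ?thesis unfolding bounded_iff by blast
    qed
    have cK: "compact K" using clK bK by (simp add: compact_eq_bounded_closed)
    have K0: "0 \<in> K" unfolding K_def using linear_0[OF lin] by auto
    have cf: "continuous_on K f" unfolding f_def by (intro continuous_intros)
    obtain k where kK: "k \<in> K" and kmax: "\<forall>k'\<in>K. f k' \<le> f k"
      using continuous_attains_sup[OF cK _ cf] K0 by blast
    define h where "h = g - k"
    define Z where "Z = {(i,j). h$i$j = 0}"
    define P where "P = {(i,j). h$i$j > 0}"
    have hO: "h \<in> orth Z P" unfolding orth_def Z_def P_def by auto
    have Mk: "M k = 0" using kK unfolding K_def by auto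
    have good: "\<forall>v\<in>orth Z P. M v = 0 \<longrightarrow> v = 0"
    proof (intro ballI impI, rule ccontr)
      fix v assume vO: "v \<in> orth Z P" and Mv: "M v = 0" and vn: "v \<noteq> 0"
      have vz: "v$i$j \<noteq> 0 \<Longrightarrow> h$i$j \<noteq> 0" for i j using vO unfolding orth_def Z_def by auto
      have vs: "v$i$j * h$i$j \<ge> 0" for i j
        using vO unfolding orth_def P_def
        by (cases "h$i$j > 0") (auto simp: mult_nonneg_nonneg mult_nonpos_nonpos)
      define T where "T = {\<bar>h$i$j\<bar> / \<bar>v$i$j\<bar> | i j. v$i$j \<noteq> 0}"
      define \<theta> where "\<theta> = Min (insert 1 T)"
      have fT: "finite T"
      proof -
        have "T \<subseteq> (\<lambda>(i,j). \<bar>h$i$j\<bar> / \<bar>v$i$j\<bar>) ` UNIV" unfolding T_def by auto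
        then show ?thesis by (rule finite_subset) simp
      qed
      have th0: "\<theta> > 0" unfolding \<theta>_def using fT
        by (subst Min_gr_iff) (auto simp: T_def vz)
      have thle: "\<theta> * \<bar>v$i$j\<bar> \<le> \<bar>h$i$j\<bar>" for i j
      proof (cases "v$i$j = 0")
        case False
        have "\<theta> \<le> \<bar>h$i$j\<bar> / \<bar>v$i$j\<bar>" unfolding \<theta>_def using fT False
          by (intro Min_le) (auto simp: T_def)
        then show ?thesis using False by (simp add: field_simps)
      qed simp
      define k' where "k' = k + \<theta> *\<^sub>R v"
      have k'K: "k' \<in> K"
      proof -
        have "M k' = 0" unfolding k'_def using Mk Mv linear_add[OF lin] linear_scale[OF lin] by simp
        moreover have "(0 \<le> k'$i$j \<and> k'$i$j \<le> g$i$j) \<or> (g$i$j \<le> k'$i$j \<and> k'$i$j \<le> 0)" for i j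
        proof -
          have kij: "(0 \<le> k$i$j \<and> k$i$j \<le> g$i$j) \<or> (g$i$j \<le> k$i$j \<and> k$i$j \<le> 0)"
            using kK unfolding K_def by auto
          have hij: "h$i$j = g$i$j - k$i$j" unfolding h_def by simp
          have k'ij: "k'$i$j = k$i$j + \<theta> * v$i$j" unfolding k'_def by simp
          have t1: "\<theta> * \<bar>v$i$j\<bar> \<le> \<bar>h$i$j\<bar>" by (rule thle)
          have t2: "v$i$j * h$i$j \<ge> 0" by (rule vs)
          have tp: "\<theta> * \<bar>v$i$j\<bar> = \<bar>\<theta> * v$i$j\<bar>" using th0 by (simp add: abs_mult)
          have t3: "(\<theta> * v$i$j) * h$i$j \<ge> 0" using t2 th0 by (simp add: mult.assoc)
          show ?thesis unfolding k'ij using box_step[OF kij hij, of "\<theta> * v$i$j"] t1 t3 tp by simp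
        qed
        ultimately show ?thesis unfolding K_def by auto
      qed
      have "f k' = f k + \<theta> * (\<Sum>i\<in>UNIV. \<Sum>j\<in>UNIV. v$i$j * sgn (g$i$j))"
        unfolding f_def k'_def by (simp add: algebra_simps sum.distrib sum_distrib_left)
      moreover have "(\<Sum>i\<in>UNIV. \<Sum>j\<in>UNIV. v$i$j * sgn (g$i$j)) > 0"
      proof -
        have nn: "v$i$j * sgn (g$i$j) = \<bar>v$i$j\<bar>" for i j
        proof (cases "v$i$j = 0")
          case False
          have hn: "h$i$j \<noteq> 0" using vz False by blast
          have kij: "(0 \<le> k$i$j \<and> k$i$j \<le> g$i$j) \<or> (g$i$j \<le> k$i$j \<and> k$i$j \<le> 0)"
            using kK unfolding K_def by auto
          have hij: "h$i$j = g$i$j - k$i$j" unfolding h_def by simp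
          show ?thesis using vs[of i j] hn kij hij False
            by (cases "h$i$j > 0") (auto simp: sgn_if abs_if zero_le_mult_iff mult_le_0_iff)
        qed simp
        obtain i0 j0 where "v$i0$j0 \<noteq> 0" using vn by (metis vec_eq_iff zero_index)
        then have "0 < (\<Sum>j\<in>UNIV. \<bar>v$i0$j\<bar>)"
          by (intro sum_pos2[where i=j0]) auto
        also have "\<dots> \<le> (\<Sum>i\<in>UNIV. \<Sum>j\<in>UNIV. \<bar>v$i$j\<bar>)"
          by (intro member_le_sum[of i0 UNIV "\<lambda>i. \<Sum>j\<in>UNIV. \<bar>v$i$j\<bar>"] sum_nonneg) auto
        finally show ?thesis by (simp add: nn)
      qed
      ultimately have "f k' > f k" using th0 by simp
      with kmax k'K show False by fastforce
    qed
    have Mh: "M h = M x0 - M x"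
      unfolding h_def g_def using Mk linear_diff[OF lin] by simp
    have hb: "e * norm h \<le> norm (M x - M x0)"
      using eb[OF hO good] Mh by (simp add: norm_minus_commute)
    show "\<exists>x'. (\<forall>i j. x'$i$j \<ge> 0) \<and> M x' = M x0 \<and> norm (x - x') \<le> 1 / e * norm (M x - M x0)"
    proof (intro exI[of _ "x + h"] conjI allI)
      fix i j
      have kij: "(0 \<le> k$i$j \<and> k$i$j \<le> g$i$j) \<or> (g$i$j \<le> k$i$j \<and> k$i$j \<le> 0)"
        using kK unfolding K_def by auto
      have "x$i$j \<ge> 0" "x0$i$j \<ge> 0" using x x0 by auto
      then show "(x + h)$i$j \<ge> 0" using kij unfolding h_def g_def by auto
    next
      show "M (x + h) = M x0" using Mh linear_add[OF lin] by simp
    next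
      show "norm (x - (x + h)) \<le> 1 / e * norm (M x - M x0)"
        using hb e by (simp add: field_simps)
    qed
  qed
qed

lemma b_cases:
  fixes x s \<xi> :: real assumes "\<xi> > 0"
  shows "(x \<le> s/\<xi> \<and> x - pos_part (x - (1/\<xi>) * s) = x) \<or> (x > s/\<xi> \<and> x - pos_part (x - (1/\<xi>) * s) = s/\<xi>)"
  unfolding pos_part_def by auto

lemma T_bound:
  fixes x x' s s' \<xi> b :: real
  assumes xi: "\<xi> > 0" and x: "x \<ge> 0" and x': "x' \<ge> 0" and s': "s' \<ge> 0" and c: "x' * s' = 0"
    and b: "b = x - pos_part (x - (1/\<xi>) * s)"
  shows "(x - x') * (s - s') \<le> \<bar>b\<bar> * (\<bar>s - s'\<bar> + \<xi> * \<bar>x - x'\<bar>)"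
proof -
  from b_cases[OF xi, of x s] b
  consider "x \<le> s/\<xi>" "b = x" | "x > s/\<xi>" "b = s/\<xi>" by auto
  then show ?thesis
  proof cases
    case 1
    then have "0 \<le> s/\<xi>" using x by linarith
    then have "s \<ge> 0" using xi by (simp add: zero_le_divide_iff)
    then have "x' * s \<ge> 0" using x' by simp
    have "(x - x') * (s - s') = x * (s - s') - x' * s" using c by (simp add: algebra_simps)
    also have "\<dots> \<le> x * (s - s')" using \<open>x' * s \<ge> 0\<close> by simp
    also have "\<dots> \<le> \<bar>b\<bar> * \<bar>s - s'\<bar>" using 1 x by (simp add: mult_left_mono)
    also have "\<dots> \<le> \<bar>b\<bar> * (\<bar>s - s'\<bar> + \<xi> * \<bar>x - x'\<bar>)"
      using xi by (intro mult_left_mono) auto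
    finally show ?thesis .
  next
    case 2
    then have sb: "s = \<xi> * b" using xi by simp
    have "x * s' \<ge> 0" using x s' by simp
    have "(x - x') * (s - s') = (x - x') * s - x * s'" using c by (simp add: algebra_simps)
    also have "\<dots> \<le> (x - x') * s" using \<open>x * s' \<ge> 0\<close> by simp
    also have "\<dots> \<le> \<bar>(x - x') * s\<bar>" by simp
    also have "\<dots> = \<bar>b\<bar> * (\<xi> * \<bar>x - x'\<bar>)" unfolding sb using xi by (simp add: abs_mult)
    also have "\<dots> \<le> \<bar>b\<bar> * (\<bar>s - s'\<bar> + \<xi> * \<bar>x - x'\<bar>)"
      by (intro mult_left_mono) auto
    finally show ?thesis .
  qed
qed

lemma mono_ineq:
  fixes w y y' t t' :: "real^'n" and p p' :: "real^'m" and x x' U :: "real^'m^'n"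
  assumes xi: "\<xi> > 0" and K: "(x',t',p',y') \<in> KKT_set w U"
    and yp: "\<forall>i. y$i > 0" and y'p: "\<forall>i. y'$i > 0" and xnn: "\<forall>i j. x$i$j \<ge> 0"
    and ha: "\<forall>i. \<bar>t$i*y$i - w$i\<bar> \<le> \<epsilon>"
    and hb: "\<forall>i j. \<bar>x$i$j - pos_part (x$i$j - (1/\<xi>)*(p$j - U$i$j*y$i))\<bar> \<le> \<epsilon>"
    and hd: "\<forall>j. \<bar>(\<Sum>i\<in>UNIV. x$i$j) - 1\<bar> \<le> \<epsilon>"
    and he: "\<forall>i. \<bar>t$i - (\<Sum>j\<in>UNIV. U$i$j * x$i$j)\<bar> \<le> \<epsilon>"
  shows "(\<Sum>i\<in>UNIV. w$i * (y$i - y'$i)^2 / (y$i * y'$i)) \<le>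
     \<epsilon> * ((\<Sum>i\<in>UNIV. \<bar>y$i - y'$i\<bar> / y$i) + (\<Sum>j\<in>UNIV. \<bar>p$j - p'$j\<bar>) + (\<Sum>i\<in>UNIV. \<bar>y$i - y'$i\<bar>)
        + (\<Sum>i\<in>UNIV. \<Sum>j\<in>UNIV. \<bar>(p$j - p'$j) - U$i$j*(y$i - y'$i)\<bar> + \<xi> * \<bar>x$i$j - x'$i$j\<bar>))"
proof -
  from K have K1: "\<forall>i. t'$i * y'$i - w$i = 0"
    and K2: "\<forall>i j. x'$i$j * (p'$j - U$i$j * y'$i) = 0"
    and K3: "\<forall>i j. p'$j - U$i$j * y'$i \<ge> 0"
    and K4: "\<forall>j. (\<Sum>i\<in>UNIV. x'$i$j) = 1"
    and K5: "\<forall>i. t'$i - (\<Sum>j\<in>UNIV. U$i$j * x'$i$j) = 0"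
    and K6: "\<forall>i j. x'$i$j \<ge> 0"
    unfolding KKT_set_def by auto
  define a where "a i = t$i*y$i - w$i" for i
  define d where "d j = (\<Sum>i\<in>UNIV. x$i$j) - 1" for j
  define e where "e i = t$i - (\<Sum>j\<in>UNIV. U$i$j * x$i$j)" for i
  define T where "T i j = (x$i$j - x'$i$j) * ((p$j - U$i$j*y$i) - (p'$j - U$i$j*y'$i))" for i j
  have id1: "(\<Sum>i\<in>UNIV. \<Sum>j\<in>UNIV. T i j) = (\<Sum>j\<in>UNIV. (p$j - p'$j) * ((\<Sum>i\<in>UNIV. x$i$j) - (\<Sum>i\<in>UNIV. x'$i$j)))
        - (\<Sum>i\<in>UNIV. (y$i - y'$i) * ((\<Sum>j\<in>UNIV. U$i$j * x$i$j) - (\<Sum>j\<in>UNIV. U$i$j * x'$i$j)))"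
  proof -
    have "T i j = (p$j - p'$j) * (x$i$j - x'$i$j) - (y$i - y'$i) * (U$i$j * x$i$j - U$i$j * x'$i$j)" for i j
      unfolding T_def by (simp add: algebra_simps)
    then have "(\<Sum>i\<in>UNIV. \<Sum>j\<in>UNIV. T i j) = (\<Sum>i\<in>UNIV. \<Sum>j\<in>UNIV. (p$j - p'$j) * (x$i$j - x'$i$j))
         - (\<Sum>i\<in>UNIV. \<Sum>j\<in>UNIV. (y$i - y'$i) * (U$i$j * x$i$j - U$i$j * x'$i$j))"
      by (simp add: sum_subtractf)
    also have "(\<Sum>i\<in>UNIV. \<Sum>j\<in>UNIV. (p$j - p'$j) * (x$i$j - x'$i$j)) = (\<Sum>j\<in>UNIV. (p$j - p'$j) * ((\<Sum>i\<in>UNIV. x$i$j) - (\<Sum>i\<in>UNIV. x'$i$j)))"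
      by (subst sum.swap) (simp add: right_diff_distrib sum_distrib_left sum_subtractf)
    also have "(\<Sum>i\<in>UNIV. \<Sum>j\<in>UNIV. (y$i - y'$i) * (U$i$j * x$i$j - U$i$j * x'$i$j)) = (\<Sum>i\<in>UNIV. (y$i - y'$i) * ((\<Sum>j\<in>UNIV. U$i$j * x$i$j) - (\<Sum>j\<in>UNIV. U$i$j * x'$i$j)))"
      by (simp add: right_diff_distrib sum_distrib_left sum_subtractf)
    finally show ?thesis .
  qed
  have id2: "(\<Sum>i\<in>UNIV. \<Sum>j\<in>UNIV. T i j) = (\<Sum>j\<in>UNIV. (p$j - p'$j) * d j)
        - (\<Sum>i\<in>UNIV. (y$i - y'$i) * ((t$i - t'$i) - e i))"
    unfolding id1 d_def e_def using K4 K5 by simp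
  have pi: "w$i * (y$i - y'$i)^2 / (y$i * y'$i) = a i * (y$i - y'$i) / y$i - (y$i - y'$i) * (t$i - t'$i)" for i
  proof -
    have y0: "y$i > 0" "y'$i > 0" using yp y'p by auto
    have tt: "t$i = (w$i + a i) / y$i" "t'$i = w$i / y'$i"
      using y0 K1 unfolding a_def by (auto simp: field_simps)
    show ?thesis unfolding tt using y0 by (simp add: field_simps power2_eq_square)
  qed
  have L: "(\<Sum>i\<in>UNIV. w$i * (y$i - y'$i)^2 / (y$i * y'$i)) =
      (\<Sum>i\<in>UNIV. a i * (y$i - y'$i) / y$i) - (\<Sum>i\<in>UNIV. (y$i - y'$i) * e i)
      - (\<Sum>j\<in>UNIV. (p$j - p'$j) * d j) + (\<Sum>i\<in>UNIV. \<Sum>j\<in>UNIV. T i j)"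
  proof -
    have "(\<Sum>i\<in>UNIV. w$i * (y$i - y'$i)^2 / (y$i * y'$i)) = (\<Sum>i\<in>UNIV. a i * (y$i - y'$i) / y$i) - (\<Sum>i\<in>UNIV. (y$i - y'$i) * (t$i - t'$i))"
      unfolding pi by (simp add: sum_subtractf)
    moreover have "(\<Sum>i\<in>UNIV. (y$i - y'$i) * ((t$i - t'$i) - e i)) = (\<Sum>i\<in>UNIV. (y$i - y'$i) * (t$i - t'$i)) - (\<Sum>i\<in>UNIV. (y$i - y'$i) * e i)"
      by (simp add: right_diff_distrib sum_subtractf)
    ultimately show ?thesis using id2 by linarith
  qed
  have B1: "(\<Sum>i\<in>UNIV. a i * (y$i - y'$i) / y$i) \<le> \<epsilon> * (\<Sum>i\<in>UNIV. \<bar>y$i - y'$i\<bar> / y$i)"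
    unfolding sum_distrib_left
  proof (rule sum_mono)
    fix i
    have "a i * (y$i - y'$i) / y$i \<le> \<bar>a i\<bar> * \<bar>y$i - y'$i\<bar> / y$i"
      using yp by (intro divide_right_mono) (auto simp: abs_mult[symmetric] less_imp_le)
    also have "\<dots> \<le> \<epsilon> * \<bar>y$i - y'$i\<bar> / y$i"
      using yp ha unfolding a_def by (intro divide_right_mono mult_right_mono) (auto simp: less_imp_le)
    finally show "a i * (y$i - y'$i) / y$i \<le> \<epsilon> * (\<bar>y$i - y'$i\<bar> / y$i)" by simp
  qed
  have B2: "- (\<Sum>i\<in>UNIV. (y$i - y'$i) * e i) \<le> \<epsilon> * (\<Sum>i\<in>UNIV. \<bar>y$i - y'$i\<bar>)"
    unfolding sum_distrib_left sum_negf[symmetric]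
  proof (rule sum_mono)
    fix i
    have "- ((y$i - y'$i) * e i) \<le> \<bar>y$i - y'$i\<bar> * \<bar>e i\<bar>" by (simp add: abs_mult[symmetric])
    also have "\<dots> \<le> \<bar>y$i - y'$i\<bar> * \<epsilon>" using he unfolding e_def by (intro mult_left_mono) auto
    finally show "- ((y$i - y'$i) * e i) \<le> \<epsilon> * \<bar>y$i - y'$i\<bar>" by (simp add: mult.commute)
  qed
  have B3: "- (\<Sum>j\<in>UNIV. (p$j - p'$j) * d j) \<le> \<epsilon> * (\<Sum>j\<in>UNIV. \<bar>p$j - p'$j\<bar>)"
    unfolding sum_distrib_left sum_negf[symmetric]
  proof (rule sum_mono)
    fix j
    have "- ((p$j - p'$j) * d j) \<le> \<bar>p$j - p'$j\<bar> * \<bar>d j\<bar>" by (simp add: abs_mult[symmetric])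
    also have "\<dots> \<le> \<bar>p$j - p'$j\<bar> * \<epsilon>" using hd unfolding d_def by (intro mult_left_mono) auto
    finally show "- ((p$j - p'$j) * d j) \<le> \<epsilon> * \<bar>p$j - p'$j\<bar>" by (simp add: mult.commute)
  qed
  have B4: "(\<Sum>i\<in>UNIV. \<Sum>j\<in>UNIV. T i j) \<le> \<epsilon> * (\<Sum>i\<in>UNIV. \<Sum>j\<in>UNIV. \<bar>(p$j - p'$j) - U$i$j*(y$i - y'$i)\<bar> + \<xi> * \<bar>x$i$j - x'$i$j\<bar>)"
    unfolding sum_distrib_left
  proof (intro sum_mono)
    fix i j
    define b where "b = x$i$j - pos_part (x$i$j - (1/\<xi>)*(p$j - U$i$j*y$i))"
    have "T i j \<le> \<bar>b\<bar> * (\<bar>(p$j - U$i$j*y$i) - (p'$j - U$i$j*y'$i)\<bar> + \<xi> * \<bar>x$i$j - x'$i$j\<bar>)"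
      unfolding T_def using K2 K3 K6 xnn xi
      by (intro T_bound[OF xi _ _ _ _ b_def]) auto
    also have "\<dots> \<le> \<epsilon> * (\<bar>(p$j - U$i$j*y$i) - (p'$j - U$i$j*y'$i)\<bar> + \<xi> * \<bar>x$i$j - x'$i$j\<bar>)"
      using hb xi unfolding b_def by (intro mult_right_mono) auto
    also have "(p$j - U$i$j*y$i) - (p'$j - U$i$j*y'$i) = (p$j - p'$j) - U$i$j*(y$i - y'$i)"
      by (simp add: algebra_simps)
    finally show "T i j \<le> \<epsilon> * (\<bar>(p$j - p'$j) - U$i$j*(y$i - y'$i)\<bar> + \<xi> * \<bar>x$i$j - x'$i$j\<bar>)" .
  qed
  show ?thesis unfolding L using B1 B2 B3 B4 by (simp add: algebra_simps)
qed

lemma comp_bounds: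
  fixes w t y :: "real^'n" and p :: "real^'m" and x U :: "real^'m^'n" and \<xi> :: real
  defines "\<epsilon> \<equiv> norm (F_res \<xi> w U (x,t,p,y))"
  shows "\<bar>t$i*y$i - w$i\<bar> \<le> \<epsilon>"
    and "\<bar>x$i$j - pos_part (x$i$j - (1/\<xi>)*(p$j - U$i$j*y$i))\<bar> \<le> \<epsilon>"
    and "neg_part (p$j - U$i$j*y$i) \<le> \<epsilon>"
    and "\<bar>(\<Sum>i\<in>UNIV. x$i$j) - 1\<bar> \<le> \<epsilon>"
    and "\<bar>t$i - (\<Sum>j\<in>UNIV. U$i$j * x$i$j)\<bar> \<le> \<epsilon>"
proof -
  define A where "A = (\<chi> i. t$i * y$i - w$i)"
  define B where "B = (\<chi> i j. x$i$j - pos_part (x$i$j - (1/\<xi>) * (p$j - U$i$j * y$i)))"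
  define C where "C = (\<chi> i j. neg_part (p$j - U$i$j * y$i))"
  define D where "D = (\<chi> j. (\<Sum>i\<in>UNIV. x$i$j) - 1)"
  define E where "E = (\<chi> i. t$i - (\<Sum>j\<in>UNIV. U$i$j * x$i$j))"
  have F: "F_res \<xi> w U (x,t,p,y) = (A,B,C,D,E)"
    unfolding F_res_def A_def B_def C_def D_def E_def by simp
  have nA: "norm A \<le> \<epsilon>" and nB: "norm B \<le> \<epsilon>" and nC: "norm C \<le> \<epsilon>" and nD: "norm D \<le> \<epsilon>" and nE: "norm E \<le> \<epsilon>"
  proof -
    have a: "norm (B,C,D,E) \<le> \<epsilon>" unfolding \<epsilon>_def F by (rule norm_snd_le)
    have b: "norm (C,D,E) \<le> \<epsilon>" using a norm_snd_le[of "(C,D,E)" B] by linarith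
    have c: "norm (D,E) \<le> \<epsilon>" using b norm_snd_le[of "(D,E)" C] by linarith
    show "norm A \<le> \<epsilon>" unfolding \<epsilon>_def F by (rule norm_fst_le)
    show "norm B \<le> \<epsilon>" using a norm_fst_le[of B "(C,D,E)"] by linarith
    show "norm C \<le> \<epsilon>" using b norm_fst_le[of C "(D,E)"] by linarith
    show "norm D \<le> \<epsilon>" using c norm_fst_le[of D E] by linarith
    show "norm E \<le> \<epsilon>" using c norm_snd_le[of E D] by linarith
  qed
  have m: "\<bar>(Q::real^'m^'n)$i$j\<bar> \<le> norm Q" for Q i j
    using component_le_norm_cart[where x="Q$i" and i=j] Finite_Cartesian_Product.norm_nth_le[where x=Q and i=i] by linarith
  show "\<bar>t$i*y$i - w$i\<bar> \<le> \<epsilon>" using nA component_le_norm_cart[of A i] unfolding A_def by simp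
  show "\<bar>x$i$j - pos_part (x$i$j - (1/\<xi>)*(p$j - U$i$j*y$i))\<bar> \<le> \<epsilon>" using nB m[of B i j] unfolding B_def by simp
  show "neg_part (p$j - U$i$j*y$i) \<le> \<epsilon>" using nC m[of C i j] unfolding C_def neg_part_def \<epsilon>_def by simp
  show "\<bar>(\<Sum>i\<in>UNIV. x$i$j) - 1\<bar> \<le> \<epsilon>" using nD component_le_norm_cart[of D j] unfolding D_def by simp
  show "\<bar>t$i - (\<Sum>j\<in>UNIV. U$i$j * x$i$j)\<bar> \<le> \<epsilon>" using nE component_le_norm_cart[of E i] unfolding E_def by simp
qed

lemma sum_abs_le_card: "(\<Sum>i\<in>UNIV. \<bar>(v::real^'n)$i\<bar>) \<le> real CARD('n) * norm v"
proof -
  have "(\<Sum>i\<in>UNIV. \<bar>v$i\<bar>) \<le> (\<Sum>i\<in>(UNIV::'n set). norm v)" by (intro sum_mono) (rule component_le_norm_cart)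
  then show ?thesis by simp
qed

lemma norm_sq_vec: "norm (v::real^'n) ^ 2 = (\<Sum>i\<in>UNIV. (v$i)^2)"
  unfolding power2_norm_eq_inner inner_vec_def by (simp add: power2_eq_square)

lemma mono2:
  fixes w y y' t t' :: "real^'n" and p p' :: "real^'m" and x x' U :: "real^'m^'n"
  assumes xi: "\<xi> > 0" and K: "(x',t',p',y') \<in> KKT_set w U"
    and cy: "cy > 0" and ylo: "\<forall>i. cy \<le> y$i" and yhi: "\<forall>i. y$i \<le> R"
    and y'b: "\<forall>i. 0 < y'$i \<and> y'$i \<le> Y0" and W: "W > 0" "\<forall>i. W \<le> w$i"
    and Ub: "\<forall>i j. \<bar>U$i$j\<bar> \<le> Ub"
    and xnn: "\<forall>i j. x$i$j \<ge> 0" and eps: "\<epsilon> \<ge> 0"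
    and ha: "\<forall>i. \<bar>t$i*y$i - w$i\<bar> \<le> \<epsilon>"
    and hb: "\<forall>i j. \<bar>x$i$j - pos_part (x$i$j - (1/\<xi>)*(p$j - U$i$j*y$i))\<bar> \<le> \<epsilon>"
    and hd: "\<forall>j. \<bar>(\<Sum>i\<in>UNIV. x$i$j) - 1\<bar> \<le> \<epsilon>"
    and he: "\<forall>i. \<bar>t$i - (\<Sum>j\<in>UNIV. U$i$j * x$i$j)\<bar> \<le> \<epsilon>"
  shows "W / (R * Y0) * norm (y - y') ^ 2 \<le>
     \<epsilon> * (real CARD('n) / cy + real CARD('m) + real CARD('n) + real CARD('n) * real CARD('m) * (1 + Ub + \<xi>))
       * norm ((x,t,p,y) - (x',t',p',y'))"
proof -
  define D where "D = norm ((x,t,p,y) - (x',t',p',y'))"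
  have Dx: "norm (x - x') \<le> D" and Dt: "norm (t - t') \<le> D" and Dp: "norm (p - p') \<le> D" and Dy: "norm (y - y') \<le> D"
  proof -
    have e: "(x,t,p,y) - (x',t',p',y') = (x - x', t - t', p - p', y - y')" by simp
    have a: "norm (t - t', p - p', y - y') \<le> D" unfolding D_def e by (rule norm_snd_le)
    have b: "norm (p - p', y - y') \<le> D" using a norm_snd_le[of "p - p'" "y - y'"] norm_snd_le[of "(p - p', y - y')" "t - t'"] by linarith
    show "norm (x - x') \<le> D" unfolding D_def e by (rule norm_fst_le)
    show "norm (t - t') \<le> D" using a norm_fst_le[of "t - t'" "(p - p', y - y')"] by linarith
    show "norm (p - p') \<le> D" using b norm_fst_le[of "p - p'" "y - y'"] by linarith
    show "norm (y - y') \<le> D" using b norm_snd_le[of "y - y'" "p - p'"] by linarith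
  qed
  have dy: "\<bar>y$i - y'$i\<bar> \<le> D" for i using Dy component_le_norm_cart[of "y - y'" i] by simp
  have dp: "\<bar>p$j - p'$j\<bar> \<le> D" for j using Dp component_le_norm_cart[of "p - p'" j] by simp
  have dx: "\<bar>x$i$j - x'$i$j\<bar> \<le> D" for i j
    using Dx component_le_norm_cart[where x="(x - x')$i" and i=j] Finite_Cartesian_Product.norm_nth_le[where x="x - x'" and i=i] by simp
  have ypos: "\<forall>i. y$i > 0" using ylo cy by (meson less_le_trans)
  have R0: "R > 0" using ylo yhi cy by (meson less_le_trans)
  have Y0p: "Y0 > 0" using y'b by (meson less_le_trans)
  have M: "(\<Sum>i\<in>UNIV. w$i * (y$i - y'$i)^2 / (y$i * y'$i)) \<le>
     \<epsilon> * ((\<Sum>i\<in>UNIV. \<bar>y$i - y'$i\<bar> / y$i) + (\<Sum>j\<in>UNIV. \<bar>p$j - p'$j\<bar>) + (\<Sum>i\<in>UNIV. \<bar>y$i - y'$i\<bar>)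
        + (\<Sum>i\<in>UNIV. \<Sum>j\<in>UNIV. \<bar>(p$j - p'$j) - U$i$j*(y$i - y'$i)\<bar> + \<xi> * \<bar>x$i$j - x'$i$j\<bar>))"
    using mono_ineq[OF xi K ypos _ xnn ha hb hd he] y'b by auto
  have L: "W / (R * Y0) * norm (y - y') ^ 2 \<le> (\<Sum>i\<in>UNIV. w$i * (y$i - y'$i)^2 / (y$i * y'$i))"
    unfolding norm_sq_vec sum_distrib_left
  proof (rule sum_mono)
    fix i
    have yy: "0 < y$i * y'$i" "y$i * y'$i \<le> R * Y0"
    proof -
      have a: "y$i > 0" "y'$i > 0" "y'$i \<le> Y0" "y$i \<le> R" using ypos y'b yhi by auto
      show "0 < y$i * y'$i" using a by simp
      show "y$i * y'$i \<le> R * Y0" using mult_mono[of "y$i" R "y'$i" Y0] a R0 by simp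
    qed
    have "W / (R * Y0) \<le> w$i / (y$i * y'$i)"
    proof -
      have w1: "W \<le> w$i" using W by auto
      have w0: "0 \<le> w$i" using w1 W by linarith
      show ?thesis by (rule frac_le[OF w0 w1]) (use yy in auto)
    qed
    then have "W / (R * Y0) * ((y - y')$i)^2 \<le> w$i / (y$i * y'$i) * ((y - y')$i)^2"
      by (intro mult_right_mono) auto
    then show "W / (R * Y0) * ((y - y')$i)^2 \<le> w$i * (y$i - y'$i)^2 / (y$i * y'$i)" by simp
  qed
  have S1: "(\<Sum>i\<in>UNIV. \<bar>y$i - y'$i\<bar> / y$i) \<le> real CARD('n) * (D / cy)"
  proof -
    have "(\<Sum>i\<in>UNIV. \<bar>y$i - y'$i\<bar> / y$i) \<le> (\<Sum>i\<in>(UNIV::'n set). D / cy)"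
      using ylo cy dy by (intro sum_mono frac_le) (auto intro: order.trans[OF abs_ge_zero dy])
    then show ?thesis by simp
  qed
  have S2: "(\<Sum>j\<in>UNIV. \<bar>p$j - p'$j\<bar>) \<le> real CARD('m) * D"
  proof -
    have "(\<Sum>j\<in>UNIV. \<bar>p$j - p'$j\<bar>) \<le> (\<Sum>j\<in>(UNIV::'m set). D)" using dp by (intro sum_mono) auto
    then show ?thesis by simp
  qed
  have S3: "(\<Sum>i\<in>UNIV. \<bar>y$i - y'$i\<bar>) \<le> real CARD('n) * D"
  proof -
    have "(\<Sum>i\<in>UNIV. \<bar>y$i - y'$i\<bar>) \<le> (\<Sum>i\<in>(UNIV::'n set). D)" using dy by (intro sum_mono) auto
    then show ?thesis by simp
  qed
  have S4: "(\<Sum>i\<in>UNIV. \<Sum>j\<in>UNIV. \<bar>(p$j - p'$j) - U$i$j*(y$i - y'$i)\<bar> + \<xi> * \<bar>x$i$j - x'$i$j\<bar>)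
       \<le> real CARD('n) * real CARD('m) * ((1 + Ub + \<xi>) * D)"
  proof -
    have "\<bar>(p$j - p'$j) - U$i$j*(y$i - y'$i)\<bar> + \<xi> * \<bar>x$i$j - x'$i$j\<bar> \<le> (1 + Ub + \<xi>) * D" for i j
    proof -
      have "\<bar>U$i$j*(y$i - y'$i)\<bar> \<le> Ub * D" unfolding abs_mult
        using Ub dy by (intro mult_mono) (auto intro: order.trans[OF abs_ge_zero])
      moreover have "\<xi> * \<bar>x$i$j - x'$i$j\<bar> \<le> \<xi> * D" using xi dx by (intro mult_left_mono) auto
      moreover have "\<bar>(p$j - p'$j) - U$i$j*(y$i - y'$i)\<bar> \<le> \<bar>p$j - p'$j\<bar> + \<bar>U$i$j*(y$i - y'$i)\<bar>"
        by (rule abs_triangle_ineq4)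
      moreover have "(1 + Ub + \<xi>) * D = D + Ub * D + \<xi> * D" by (simp add: algebra_simps)
      ultimately show ?thesis using dp[of j] by linarith
    qed
    then have "(\<Sum>i\<in>UNIV. \<Sum>j\<in>UNIV. \<bar>(p$j - p'$j) - U$i$j*(y$i - y'$i)\<bar> + \<xi> * \<bar>x$i$j - x'$i$j\<bar>)
       \<le> (\<Sum>i\<in>(UNIV::'n set). \<Sum>j\<in>(UNIV::'m set). (1 + Ub + \<xi>) * D)" by (intro sum_mono) auto
    then show ?thesis by simp
  qed
  have "\<epsilon> * ((\<Sum>i\<in>UNIV. \<bar>y$i - y'$i\<bar> / y$i) + (\<Sum>j\<in>UNIV. \<bar>p$j - p'$j\<bar>) + (\<Sum>i\<in>UNIV. \<bar>y$i - y'$i\<bar>)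
        + (\<Sum>i\<in>UNIV. \<Sum>j\<in>UNIV. \<bar>(p$j - p'$j) - U$i$j*(y$i - y'$i)\<bar> + \<xi> * \<bar>x$i$j - x'$i$j\<bar>))
      \<le> \<epsilon> * (real CARD('n) * (D / cy) + real CARD('m) * D + real CARD('n) * D + real CARD('n) * real CARD('m) * ((1 + Ub + \<xi>) * D))"
    using S1 S2 S3 S4 eps by (intro mult_left_mono) auto
  also have "\<dots> = \<epsilon> * (real CARD('n) / cy + real CARD('m) + real CARD('n) + real CARD('n) * real CARD('m) * (1 + Ub + \<xi>)) * D"
    by (simp add: algebra_simps)
  finally show ?thesis using L M unfolding D_def by linarith
qed


lemma mat_comp_le: "\<bar>(Q::real^'m^'n)$i$j\<bar> \<le> norm Q"
  using component_le_norm_cart[where x="Q$i" and i=j] Finite_Cartesian_Product.norm_nth_le[where x=Q and i=i] by linarith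

lemma norm4:
  fixes a :: "'a::real_normed_vector" and b :: "'b::real_normed_vector" and c :: "'c::real_normed_vector" and d :: "'d::real_normed_vector"
  shows "norm a \<le> norm (a,b,c,d)" "norm b \<le> norm (a,b,c,d)" "norm c \<le> norm (a,b,c,d)" "norm d \<le> norm (a,b,c,d)"
    and "norm (a,b,c,d) \<le> norm a + norm b + norm c + norm d"
proof -
  have 1: "norm (b,c,d) \<le> norm (a,b,c,d)" by (rule norm_snd_le)
  have 2: "norm (c,d) \<le> norm (a,b,c,d)" using 1 norm_snd_le[of "(c,d)" b] by linarith
  show "norm a \<le> norm (a,b,c,d)" by (rule norm_fst_le)
  show "norm b \<le> norm (a,b,c,d)" using 1 norm_fst_le[of b "(c,d)"] by linarith
  show "norm c \<le> norm (a,b,c,d)" using 2 norm_fst_le[of c d] by linarith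
  show "norm d \<le> norm (a,b,c,d)" using 2 norm_snd_le[of d c] by linarith
  show "norm (a,b,c,d) \<le> norm a + norm b + norm c + norm d"
    using norm_Pair_le[of a "(b,c,d)"] norm_Pair_le[of b "(c,d)"] norm_Pair_le[of c d] by linarith
qed

lemma quad:
  fixes q e A :: real
  assumes q0: "q \<ge> 0" and e0: "e \<ge> 0" and A0: "A \<ge> 0" and hq: "q^2 \<le> A * e * (e + q)"
  shows "q \<le> (A + 1) * e"
proof (rule ccontr)
  assume "\<not> ?thesis"
  then have h: "q > (A + 1) * e" by simp
  show False
  proof (cases "e = 0")
    case True
    then have "q^2 \<le> 0" using hq by simp
    moreover have "q > 0" using h True by simp
    ultimately show False by (smt (verit) power2_eq_square mult_pos_pos)
  next
    case False
    then have ep: "e > 0" using e0 by simp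
    have qp: "q > 0" using h ep A0 by (smt (verit) mult_pos_pos)
    have 1: "q * q > q * ((A + 1) * e)" using h qp by simp
    have 2: "e * q \<ge> e * ((A+1)*e)" using h ep by (intro mult_left_mono) auto
    have 3: "e * e \<ge> 0" by simp
    have 4: "A * e * e \<ge> 0" using A0 e0 by simp
    have "q * q \<le> A*e*e + A*e*q" using hq by (simp add: power2_eq_square algebra_simps)
    moreover have "q * ((A + 1) * e) = A*e*q + e*q" by (simp add: algebra_simps)
    moreover have "e * ((A+1)*e) = A*e*e + e*e" by (simp add: algebra_simps)
    ultimately show False using 1 2 3 4 by linarith
  qed
qed

definition Mop :: "real^'m^'n \<Rightarrow> real^'m^'n \<Rightarrow> (real^'m) \<times> (real^'n) \<times> (real^'m^'n)" where
  "Mop U x = ((\<chi> j. \<Sum>i\<in>UNIV. x$i$j), (\<chi> i. \<Sum>j\<in>UNIV. U$i$j * x$i$j), (\<chi> i j. x$i$j))"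

lemma linear_Mop_sel: "linear (\<lambda>x::real^'m^'n. ((\<chi> j. \<Sum>i\<in>UNIV. x$i$j), (\<chi> i. \<Sum>j\<in>UNIV. U$i$j * x$i$j), (\<chi> i j. if S i j then x$i$j else 0)))"
  by (rule linearI) (auto simp: vec_eq_iff sum.distrib sum_distrib_left algebra_simps)

theorem proposition1:
  fixes w :: "real^'n" and U :: "real^'m^'n" and \<xi> R :: real
  assumes "\<xi> > 0" and "R > 0"
    and "\<forall>i. w$i > 0"
    and "assumption1 U"
  shows "\<exists>\<gamma>>0. \<forall>(z :: (real^'m^'n) \<times> (real^'n) \<times> (real^'m) \<times> (real^'n)).
           (\<forall>i j. (fst z)$i$j \<ge> 0) \<longrightarrow> norm z \<le> R \<longrightarrow>
           norm (F_res \<xi> w U z) \<ge> \<gamma> * infdist z (KKT_set w U)"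
proof (cases "KKT_set w U = {}")
  case True
  then show ?thesis by (intro exI[of _ 1]) (simp add: infdist_def)
next
  case False
  have xi: "\<xi> > 0" and R0: "R > 0" and wpos: "\<forall>i. w$i > 0" using assms by auto
  have Unn: "\<forall>i j. U$i$j \<ge> 0" using assms(4) unfolding assumption1_def by auto
  obtain x0 t0 p0 y0 where K0: "(x0,t0,p0,y0) \<in> KKT_set w U" using False by auto
  from K0 have K1: "\<forall>i. t0$i * y0$i - w$i = 0"
    and K2: "\<forall>i j. x0$i$j * (p0$j - U$i$j * y0$i) = 0"
    and K3: "\<forall>i j. p0$j - U$i$j * y0$i \<ge> 0"
    and K4: "\<forall>j. (\<Sum>i\<in>UNIV. x0$i$j) = 1"
    and K5: "\<forall>i. t0$i - (\<Sum>j\<in>UNIV. U$i$j * x0$i$j) = 0"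
    and K6: "\<forall>i j. x0$i$j \<ge> 0"
    unfolding KKT_set_def by auto
  have t0nn: "t0$i \<ge> 0" for i
  proof -
    have "(\<Sum>j\<in>UNIV. U$i$j * x0$i$j) \<ge> 0" using Unn K6 by (intro sum_nonneg) auto
    then show ?thesis using K5 by (metis eq_iff_diff_eq_0)
  qed
  have t0y0: "t0$i * y0$i = w$i" for i using K1 by (metis eq_iff_diff_eq_0)
  have y0pos: "y0$i > 0" for i
  proof -
    have "t0$i * y0$i > 0" using t0y0 wpos by simp
    then show ?thesis using t0nn[of i] by (simp add: zero_less_mult_iff)
  qed
  define W where "W = Min (range (\<lambda>i. w$i))"
  have Wpos: "W > 0" unfolding W_def using wpos by (subst Min_gr_iff) auto
  have Wle: "\<forall>i. W \<le> w$i" unfolding W_def by (auto intro: Min_le)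
  define Ub where "Ub = norm U + 1"
  have Ub: "\<forall>i j. \<bar>U$i$j\<bar> \<le> Ub" unfolding Ub_def using mat_comp_le[of U] by (metis add_increasing2 zero_le_one)
  have Ubpos: "Ub > 0" unfolding Ub_def by (smt (verit) norm_ge_zero)
  define Y0 where "Y0 = norm y0 + 1"
  have y0b: "\<forall>i. 0 < y0$i \<and> y0$i \<le> Y0"
  proof
    fix i show "0 < y0$i \<and> y0$i \<le> Y0" unfolding Y0_def using y0pos[of i] component_le_norm_cart[of y0 i] by linarith
  qed
  have Y0pos: "Y0 > 0" unfolding Y0_def by (smt (verit) norm_ge_zero)
  define T0 where "T0 = norm t0 + 1"
  have t0b: "\<forall>i. \<bar>t0$i\<bar> \<le> T0"
  proof
    fix i show "\<bar>t0$i\<bar> \<le> T0" unfolding T0_def using component_le_norm_cart[of t0 i] by linarith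
  qed
  have T0pos: "T0 > 0" unfolding T0_def by (smt (verit) norm_ge_zero)
  define Z0 where "Z0 = norm (x0,t0,p0,y0)"
  have Z0nn: "Z0 \<ge> 0" unfolding Z0_def by simp
  define N where "N = real CARD('n)"
  define Mc where "Mc = real CARD('m)"
  have Npos: "N > 0" and Mcpos: "Mc > 0" unfolding N_def Mc_def by auto
  define cy where "cy = W / (2 * R)"
  have cypos: "cy > 0" unfolding cy_def using Wpos R0 by simp
  define \<Phi> where "\<Phi> = N / cy + Mc + N + N * Mc * (1 + Ub + \<xi>)"
  have \<Phi>pos: "\<Phi> > 0" unfolding \<Phi>_def using Npos Mcpos cypos Ubpos xi
    by (intro add_pos_nonneg add_nonneg_nonneg mult_nonneg_nonneg) auto
  define K1c where "K1c = \<Phi> / (W / (R * Y0))"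
  have K1pos: "K1c > 0" unfolding K1c_def using \<Phi>pos Wpos R0 Y0pos by simp
  define S0 where "S0 = {p0$j - U$i$j*y0$i | i j. p0$j - U$i$j*y0$i > 0}"
  define \<sigma> where "\<sigma> = Min (insert 1 S0)"
  have fS0: "finite S0"
  proof -
    have "S0 \<subseteq> (\<lambda>(i,j). p0$j - U$i$j*y0$i) ` UNIV" unfolding S0_def by auto
    then show ?thesis by (rule finite_subset) simp
  qed
  have \<sigma>pos: "\<sigma> > 0" unfolding \<sigma>_def using fS0 by (subst Min_gr_iff) (auto simp: S0_def)
  have \<sigma>le: "p0$j - U$i$j*y0$i > 0 \<Longrightarrow> \<sigma> \<le> p0$j - U$i$j*y0$i" for i j
    unfolding \<sigma>_def using fS0 by (intro Min_le) (auto simp: S0_def)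
  define q0 where "q0 = (\<sigma> / (4 * Ub))^2"
  have q0pos: "q0 > 0" unfolding q0_def using \<sigma>pos Ubpos by simp
  define Mx where "Mx = (\<lambda>x::real^'m^'n. ((\<chi> j. \<Sum>i\<in>UNIV. x$i$j), (\<chi> i. \<Sum>j\<in>UNIV. U$i$j * x$i$j),
        (\<chi> i j. if p0$j - U$i$j*y0$i > 0 then x$i$j else 0)))"
  have linM: "linear Mx" unfolding Mx_def by (rule linear_Mop_sel)
  obtain \<kappa> where \<kappa>pos: "\<kappa> > 0" and hof: "\<And>x x0. (\<forall>i j. x$i$j \<ge> 0) \<Longrightarrow> (\<forall>i j. x0$i$j \<ge> 0) \<Longrightarrow>
     (\<exists>x'. (\<forall>i j. x'$i$j \<ge> 0) \<and> Mx x' = Mx x0 \<and> norm (x - x') \<le> \<kappa> * norm (Mx x - Mx x0))"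
    using hoffman[OF linM] by blast
  define \<epsilon>1 where "\<epsilon>1 = min (min (W/2) (W/(4*R))) (min (1/(4*N)) (min (\<sigma>/(2*(2*\<xi>+1))) (q0/(K1c*(R+Z0)+1))))"
  have \<epsilon>1pos: "\<epsilon>1 > 0" unfolding \<epsilon>1_def using Wpos R0 Npos \<sigma>pos xi q0pos K1pos Z0nn
    by (simp add: add_pos_nonneg)
  define A1 where "A1 = \<kappa>*(Mc + N + N/cy + N*Mc) + N/cy + Mc*(\<xi>+1)"
  define B1 where "B1 = \<kappa>*N*T0/cy + N*T0/cy + Mc*Ub + 1"
  have A1nn: "A1 \<ge> 0" unfolding A1_def using \<kappa>pos Npos Mcpos cypos xi by (simp add: add_nonneg_nonneg)
  have B1nn: "B1 \<ge> 0" unfolding B1_def using \<kappa>pos Npos Mcpos cypos T0pos Ubpos by (simp add: add_nonneg_nonneg)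
  define C3 where "C3 = A1 + B1"
  have C3nn: "C3 \<ge> 0" unfolding C3_def using A1nn B1nn by simp
  define Cfin where "Cfin = C3 * (K1c * C3 + 2)"
  have Cfinnn: "Cfin \<ge> 0" unfolding Cfin_def using C3nn K1pos by simp
  define G where "G = Cfin + (R + Z0) / \<epsilon>1"
  have Gpos: "G > 0" unfolding G_def using Cfinnn R0 Z0nn \<epsilon>1pos by (simp add: add_nonneg_pos)
  have key: "infdist (x,t,p,y) (KKT_set w U) \<le> G * norm (F_res \<xi> w U (x,t,p,y))"
    if xnn: "\<forall>i j. x$i$j \<ge> 0" and zR: "norm (x,t,p,y) \<le> R" for x t p y
  proof -
    define \<epsilon> where "\<epsilon> = norm (F_res \<xi> w U (x,t,p,y))"
    have e0: "\<epsilon> \<ge> 0" unfolding \<epsilon>_def by simp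
    have d0: "infdist (x,t,p,y) (KKT_set w U) \<le> R + Z0"
    proof -
      have "infdist (x,t,p,y) (KKT_set w U) \<le> dist (x,t,p,y) (x0,t0,p0,y0)" by (rule infdist_le[OF K0])
      also have "\<dots> \<le> norm (x,t,p,y) + norm (x0,t0,p0,y0)" unfolding dist_norm by (rule norm_triangle_ineq4)
      finally show ?thesis using zR unfolding Z0_def by linarith
    qed
    show ?thesis
    proof (cases "\<epsilon> \<le> \<epsilon>1")
      case False
      have "R + Z0 = ((R + Z0) / \<epsilon>1) * \<epsilon>1" using \<epsilon>1pos by simp
      also have "\<dots> \<le> ((R + Z0) / \<epsilon>1) * \<epsilon>" using False R0 Z0nn \<epsilon>1pos by (intro mult_left_mono) auto
      also have "\<dots> \<le> G * \<epsilon>" unfolding G_def using Cfinnn e0 by (simp add: distrib_right)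
      finally show ?thesis using d0 unfolding \<epsilon>_def by linarith
    next
      case True
      have ha: "\<forall>i. \<bar>t$i*y$i - w$i\<bar> \<le> \<epsilon>" unfolding \<epsilon>_def using comp_bounds(1)[where t=t and y=y and w=w and \<xi>=\<xi> and U=U and x=x and p=p] by blast
      have hb: "\<forall>i j. \<bar>x$i$j - pos_part (x$i$j - (1/\<xi>)*(p$j - U$i$j*y$i))\<bar> \<le> \<epsilon>" unfolding \<epsilon>_def using comp_bounds(2)[where t=t and y=y and w=w and \<xi>=\<xi> and U=U and x=x and p=p] by blast
      have hc: "\<forall>i j. neg_part (p$j - U$i$j*y$i) \<le> \<epsilon>" unfolding \<epsilon>_def using comp_bounds(3)[where t=t and y=y and w=w and \<xi>=\<xi> and U=U and x=x and p=p] by blast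
      have hd: "\<forall>j. \<bar>(\<Sum>i\<in>UNIV. x$i$j) - 1\<bar> \<le> \<epsilon>" unfolding \<epsilon>_def using comp_bounds(4)[where t=t and y=y and w=w and \<xi>=\<xi> and U=U and x=x and p=p] by blast
      have he: "\<forall>i. \<bar>t$i - (\<Sum>j\<in>UNIV. U$i$j * x$i$j)\<bar> \<le> \<epsilon>" unfolding \<epsilon>_def using comp_bounds(5)[where t=t and y=y and w=w and \<xi>=\<xi> and U=U and x=x and p=p] by blast
      have e1: "\<epsilon> \<le> W/2" "\<epsilon> \<le> W/(4*R)" "\<epsilon> \<le> 1/(4*N)" "\<epsilon> \<le> \<sigma>/(2*(2*\<xi>+1))" "\<epsilon> \<le> q0/(K1c*(R+Z0)+1)"
      proof -
        have "\<epsilon> \<le> min (min (W/2) (W/(4*R))) (min (1/(4*N)) (min (\<sigma>/(2*(2*\<xi>+1))) (q0/(K1c*(R+Z0)+1))))"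
          using True unfolding \<epsilon>1_def .
        then show "\<epsilon> \<le> W/2" "\<epsilon> \<le> W/(4*R)" "\<epsilon> \<le> 1/(4*N)" "\<epsilon> \<le> \<sigma>/(2*(2*\<xi>+1))" "\<epsilon> \<le> q0/(K1c*(R+Z0)+1)"
          by (simp_all only: min.bounded_iff)
      qed
      have tR: "\<bar>t$i\<bar> \<le> R" for i using component_le_norm_cart[of t i] norm4(2)[where a=x and b=t and c=p and d=y] zR by linarith
      have yR: "\<bar>y$i\<bar> \<le> R" for i using component_le_norm_cart[of y i] norm4(4)[where a=x and b=t and c=p and d=y] zR by linarith
      have tpos: "t$i > 0" and ylo: "cy \<le> y$i" for i
      proof -
        have s0: "(\<Sum>j\<in>UNIV. U$i$j * x$i$j) \<ge> 0" using Unn xnn by (intro sum_nonneg) auto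
        have "\<bar>t$i - (\<Sum>j\<in>UNIV. U$i$j * x$i$j)\<bar> \<le> \<epsilon>" using he by blast
        then have tlo: "t$i \<ge> - \<epsilon>" using s0 unfolding abs_le_iff by linarith
        have "\<bar>t$i*y$i - w$i\<bar> \<le> \<epsilon>" using ha by blast
        then have ty: "t$i * y$i \<ge> W/2" using Wle[rule_format, of i] e1(1) unfolding abs_le_iff by linarith
        have eR: "\<epsilon> * R \<le> W/4" using e1(2) R0 by (simp add: field_simps)
        show tp: "t$i > 0"
        proof (rule ccontr)
          assume "\<not> t$i > 0"
          then have "\<bar>t$i\<bar> \<le> \<epsilon>" using tlo by simp
          then have "\<bar>t$i\<bar> * \<bar>y$i\<bar> \<le> \<epsilon> * R" using yR[of i] e0 by (intro mult_mono) auto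
          moreover have "t$i * y$i \<le> \<bar>t$i\<bar> * \<bar>y$i\<bar>" by (simp add: abs_mult[symmetric])
          ultimately have "t$i * y$i \<le> \<epsilon> * R" by linarith
          then show False using ty eR Wpos by linarith
        qed
        have "0 < t$i*y$i" using ty Wpos by linarith
        then have yp: "y$i > 0" using tp by (simp add: zero_less_mult_iff)
        have "t$i * y$i \<le> R * y$i" using tR[of i] yp by (intro mult_right_mono) auto
        then have "W/2 \<le> R * y$i" using ty by linarith
        then show "cy \<le> y$i" unfolding cy_def using R0 by (simp add: field_simps)
      qed
      have yhi: "\<forall>i. y$i \<le> R" using yR by (simp add: abs_le_iff)
      define q where "q = norm (y - y0)"
      have q0nn: "q \<ge> 0" unfolding q_def by simp
      have dyq: "\<bar>y$i - y0$i\<bar> \<le> q" for i unfolding q_def using component_le_norm_cart[of "y - y0" i] by simp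
      have Ud: "\<bar>U$i$j*(y$i - y0$i)\<bar> \<le> Ub*q" for i j
        unfolding abs_mult using Ub dyq[of i] Ubpos by (intro mult_mono) auto
      have mono: "q^2 \<le> K1c * \<epsilon> * norm ((x,t,p,y) - (x',t',p',y0))"
        if "(x',t',p',y0) \<in> KKT_set w U" for x' t' p'
      proof -
        have "W / (R * Y0) * q ^ 2 \<le> \<epsilon> * \<Phi> * norm ((x,t,p,y) - (x',t',p',y0))"
          unfolding q_def \<Phi>_def N_def Mc_def
          by (rule mono2[OF xi that cypos _ yhi y0b Wpos Wle Ub xnn e0 ha hb hd he]) (use ylo in auto)
        then show ?thesis unfolding K1c_def using Wpos R0 Y0pos by (simp add: field_simps)
      qed
      have qsmall: "q < \<sigma> / (4 * Ub)"
      proof -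
        have "q^2 \<le> K1c * \<epsilon> * norm ((x,t,p,y) - (x0,t0,p0,y0))" by (rule mono[OF K0])
        also have "\<dots> \<le> K1c * \<epsilon> * (R + Z0)"
        proof -
          have "norm ((x,t,p,y) - (x0,t0,p0,y0)) \<le> R + Z0"
            using norm_triangle_ineq4[of "(x,t,p,y)" "(x0,t0,p0,y0)"] zR unfolding Z0_def by linarith
          then show ?thesis using K1pos e0 by (intro mult_left_mono) auto
        qed
        also have "\<dots> < q0"
        proof -
          have "\<epsilon> * (K1c*(R+Z0)+1) \<le> q0" using e1(5) K1pos R0 Z0nn by (simp add: field_simps add_pos_nonneg)
          then have "K1c * \<epsilon> * (R + Z0) \<le> q0 - \<epsilon>" by (simp add: algebra_simps)
          moreover have "K1c * \<epsilon> * (R + Z0) < q0 \<or> \<epsilon> > 0"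
            using K1pos q0pos e0 by (cases "\<epsilon> = 0") auto
          ultimately show ?thesis by linarith
        qed
        finally have "q^2 < (\<sigma> / (4 * Ub))^2" unfolding q0_def .
        then show ?thesis by (rule power_less_imp_less_base) (use \<sigma>pos Ubpos in simp)
      qed
      have dp: "\<bar>p$j - p0$j\<bar> \<le> (\<xi>+1)*\<epsilon> + Ub*q" for j
      proof -
        have "\<exists>i. x$i$j \<ge> 1/(2*N)"
        proof (rule ccontr)
          assume "\<not> ?thesis"
          then have "\<forall>i. x$i$j < 1/(2*N)" by (meson not_le)
          then have "(\<Sum>i\<in>UNIV. x$i$j) < (\<Sum>i\<in>(UNIV::'n set). 1/(2*N))"
            by (intro sum_strict_mono) auto
          also have "\<dots> = 1/2" unfolding N_def by simp
          finally have "(\<Sum>i\<in>UNIV. x$i$j) < 1/2" .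
          moreover have "\<epsilon> \<le> 1/4" using e1(3) Npos
          proof -
            have "N \<ge> 1" unfolding N_def by simp
            then have "1/(4*N) \<le> 1/4" by (simp add: field_simps)
            then show ?thesis using e1(3) by linarith
          qed
          ultimately show False using hd[rule_format, of j] by linarith
        qed
        then obtain i where xi1: "x$i$j \<ge> 1/(2*N)" by blast
        have "1/(4*N) < 1/(2*N)" using Npos by (simp add: field_simps)
        then have xe: "x$i$j > \<epsilon>" using xi1 e1(3) by linarith
        define sv where "sv = p$j - U$i$j*y$i"
        have bb: "\<bar>x$i$j - pos_part (x$i$j - (1/\<xi>) * sv)\<bar> \<le> \<epsilon>" unfolding sv_def using hb by blast
        have bc: "(x$i$j \<le> sv/\<xi> \<and> x$i$j - pos_part (x$i$j - (1/\<xi>) * sv) = x$i$j) \<or> (x$i$j > sv/\<xi> \<and> x$i$j - pos_part (x$i$j - (1/\<xi>) * sv) = sv/\<xi>)"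
          by (rule b_cases[OF xi])
        then have "x$i$j - pos_part (x$i$j - (1/\<xi>) * sv) = sv/\<xi>"
        proof
          assume a: "x$i$j \<le> sv/\<xi> \<and> x$i$j - pos_part (x$i$j - (1/\<xi>) * sv) = x$i$j"
          then have "\<bar>x$i$j\<bar> \<le> \<epsilon>" using bb by simp
          then show ?thesis using xe abs_ge_self[of "x$i$j"] by linarith
        qed blast
        then have "\<bar>sv/\<xi>\<bar> \<le> \<epsilon>" using bb by simp
        then have svx: "\<xi> * \<bar>sv/\<xi>\<bar> \<le> \<xi> * \<epsilon>" by (rule mult_left_mono[OF _ less_imp_le[OF xi]])
        have "\<bar>sv/\<xi>\<bar> = \<bar>sv\<bar> / \<xi>" using xi by (simp only: abs_divide abs_of_pos)
        then have "\<xi> * \<bar>sv/\<xi>\<bar> = \<bar>sv\<bar>" using xi by simp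
        then have "\<bar>sv\<bar> \<le> \<xi> * \<epsilon>" using svx by simp
        then have "sv \<le> \<xi> * \<epsilon>" by (rule order.trans[OF abs_ge_self])
        then have up: "p$j \<le> \<xi> * \<epsilon> + U$i$j*y$i" unfolding sv_def by simp
        have "U$i$j*y$i = U$i$j*y0$i + U$i$j*(y$i - y0$i)" by (simp add: right_diff_distrib)
        moreover have "U$i$j*(y$i - y0$i) \<le> Ub * q"
          by (rule order.trans[OF abs_ge_self Ud])
        moreover have "U$i$j*y0$i \<le> p0$j"
        proof -
          have "p0$j - U$i$j*y0$i \<ge> 0" using K3 by blast
          then show ?thesis by simp
        qed
        ultimately have up2: "p$j - p0$j \<le> \<xi> * \<epsilon> + Ub * q" using up by linarith
        have "\<exists>i'. x0$i'$j > 0"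
        proof (rule ccontr)
          assume nex: "\<not> (\<exists>i'. x0$i'$j > 0)"
          have "x0$i'$j = 0" for i'
          proof -
            have "\<not> x0$i'$j > 0" using nex by blast
            moreover have "x0$i'$j \<ge> 0" using K6 by blast
            ultimately show ?thesis by linarith
          qed
          then have "(\<Sum>i\<in>UNIV. x0$i$j) = 0" by simp
          then show False using K4 by simp
        qed
        then obtain i' where x0p: "x0$i'$j > 0" by blast
        have "x0$i'$j * (p0$j - U$i'$j * y0$i') = 0" using K2 by blast
        then have "p0$j - U$i'$j * y0$i' = 0" using x0p by simp
        then have s0: "p0$j = U$i'$j*y0$i'" by linarith
        have "neg_part (p$j - U$i'$j*y$i') \<le> \<epsilon>" using hc by blast
        then have "max (- (p$j - U$i'$j*y$i')) 0 \<le> \<epsilon>" unfolding neg_part_def .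
        then have lo1: "p$j - U$i'$j*y$i' \<ge> - \<epsilon>" by linarith
        have "U$i'$j*y$i' = U$i'$j*y0$i' + U$i'$j*(y$i' - y0$i')" by (simp add: right_diff_distrib)
        moreover have "- (U$i'$j*(y$i' - y0$i')) \<le> Ub * q"
          by (rule order.trans[OF abs_ge_minus_self Ud])
        ultimately have lo2: "p0$j - p$j \<le> \<epsilon> + Ub * q" using s0 lo1 by linarith
        have f1: "(\<xi>+1)*\<epsilon> = \<xi>*\<epsilon> + \<epsilon>" by (simp add: algebra_simps)
        have f2: "\<xi>*\<epsilon> \<ge> 0" using xi e0 by simp
        have "p$j - p0$j \<le> (\<xi>+1)*\<epsilon> + Ub*q" using up2 f1 f2 e0 by linarith
        moreover have "p0$j - p$j \<le> (\<xi>+1)*\<epsilon> + Ub*q" using lo2 f1 f2 by linarith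
        ultimately show ?thesis unfolding abs_le_iff by linarith
      qed
      have cpos: "0 < 2*(2*\<xi>+1)" using xi by simp
      have eA: "\<epsilon>*(2*(2*\<xi>+1)) \<le> \<sigma>" using e1(4) by (simp only: pos_le_divide_eq[OF cpos])
      have eA2: "\<epsilon>*(2*(2*\<xi>+1)) = 4*(\<xi>*\<epsilon>) + 2*\<epsilon>" by (simp add: algebra_simps)
      have c4: "0 < 4 * Ub" using Ubpos by simp
      have qB: "q * (4 * Ub) < \<sigma>" using qsmall by (simp only: pos_less_divide_eq[OF c4])
      have qB2: "q * (4 * Ub) = 4 * (Ub * q)" by (simp add: algebra_simps)
      have offs: "\<bar>x$i$j\<bar> \<le> \<epsilon>" if sp: "p0$j - U$i$j*y0$i > 0" for i j
      proof -
        have sg: "\<sigma> \<le> p0$j - U$i$j*y0$i" by (rule \<sigma>le[OF sp])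
        define sv where "sv = p$j - U$i$j*y$i"
        have sve: "sv = (p0$j - U$i$j*y0$i) + (p$j - p0$j) - U$i$j*(y$i - y0$i)"
          unfolding sv_def by (simp add: right_diff_distrib)
        have "\<bar>p$j - p0$j\<bar> \<le> (\<xi>+1)*\<epsilon> + Ub*q" by (rule dp)
        then have dpl: "p$j - p0$j \<ge> - ((\<xi>+1)*\<epsilon> + Ub*q)" unfolding abs_le_iff by linarith
        have f1: "(\<xi>+1)*\<epsilon> = \<xi>*\<epsilon> + \<epsilon>" by (simp add: algebra_simps)
        have ud: "U$i$j*(y$i - y0$i) \<le> Ub * q" by (rule order.trans[OF abs_ge_self Ud])
        have svb: "sv > \<xi> * \<epsilon>" using sve sg dpl f1 ud eA eA2 qB qB2 by linarith
        have bb: "\<bar>x$i$j - pos_part (x$i$j - (1/\<xi>) * sv)\<bar> \<le> \<epsilon>" unfolding sv_def using hb by blast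
        have bc: "(x$i$j \<le> sv/\<xi> \<and> x$i$j - pos_part (x$i$j - (1/\<xi>) * sv) = x$i$j) \<or> (x$i$j > sv/\<xi> \<and> x$i$j - pos_part (x$i$j - (1/\<xi>) * sv) = sv/\<xi>)"
          by (rule b_cases[OF xi])
        then have "x$i$j - pos_part (x$i$j - (1/\<xi>) * sv) = x$i$j"
        proof
          assume a: "x$i$j > sv/\<xi> \<and> x$i$j - pos_part (x$i$j - (1/\<xi>) * sv) = sv/\<xi>"
          then have "\<bar>sv/\<xi>\<bar> \<le> \<epsilon>" using bb by simp
          then have "sv/\<xi> \<le> \<epsilon>" by (rule order.trans[OF abs_ge_self])
          then have "sv \<le> \<epsilon> * \<xi>" by (simp only: pos_divide_le_eq[OF xi])
          then show ?thesis using svb by (simp add: mult.commute)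
        qed blast
        then show ?thesis using bb by simp
      qed
      have dt: "\<bar>t$i - t0$i\<bar> \<le> (\<epsilon> + T0*q)/cy" for i
      proof -
        have yc: "cy \<le> y$i" by (rule ylo)
        have ha': "\<bar>t$i*y$i - t0$i*y0$i\<bar> \<le> \<epsilon>" using ha t0y0[of i] by simp
        have eq: "y$i * (t$i - t0$i) = (t$i*y$i - t0$i*y0$i) - t0$i*(y$i - y0$i)" by (simp add: algebra_simps)
        have "\<bar>t0$i*(y$i - y0$i)\<bar> \<le> T0 * q" unfolding abs_mult
          using t0b dyq[of i] T0pos by (intro mult_mono) auto
        then have "\<bar>y$i * (t$i - t0$i)\<bar> \<le> \<epsilon> + T0*q" unfolding eq
          using ha' abs_triangle_ineq4[of "t$i*y$i - t0$i*y0$i" "t0$i*(y$i - y0$i)"] by linarith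
        moreover have "\<bar>y$i * (t$i - t0$i)\<bar> = y$i * \<bar>t$i - t0$i\<bar>" using yc cypos by (simp add: abs_mult)
        moreover have "\<bar>t$i - t0$i\<bar> * cy \<le> y$i * \<bar>t$i - t0$i\<bar>"
          using mult_right_mono[OF yc abs_ge_zero[of "t$i - t0$i"]] by (simp add: mult.commute)
        ultimately have "\<bar>t$i - t0$i\<bar> * cy \<le> \<epsilon> + T0*q" by linarith
        then show ?thesis by (simp only: pos_le_divide_eq[OF cypos])
      qed
      obtain x' where x'nn: "\<forall>i j. x'$i$j \<ge> 0" and Mxeq: "Mx x' = Mx x0"
          and xd: "norm (x - x') \<le> \<kappa> * norm (Mx x - Mx x0)"
        using hof[OF xnn K6] by blast
      have x0off: "x0$i$j = 0" if "p0$j - U$i$j*y0$i > 0" for i j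
      proof -
        have "x0$i$j * (p0$j - U$i$j * y0$i) = 0" using K2 by blast
        then show ?thesis using that by simp
      qed
      have nM: "norm (Mx x - Mx x0) \<le> Mc*\<epsilon> + N*(\<epsilon> + (\<epsilon> + T0*q)/cy) + N*Mc*\<epsilon>"
      proof -
        define V1 where "V1 = ((\<chi> j. (\<Sum>i\<in>UNIV. x$i$j) - (\<Sum>i\<in>UNIV. x0$i$j)) :: real^'m)"
        define V2 where "V2 = ((\<chi> i. (\<Sum>j\<in>UNIV. U$i$j * x$i$j) - (\<Sum>j\<in>UNIV. U$i$j * x0$i$j)) :: real^'n)"
        define V3 where "V3 = ((\<chi> i j. (if p0$j - U$i$j*y0$i > 0 then x$i$j else 0) - (if p0$j - U$i$j*y0$i > 0 then x0$i$j else 0)) :: real^'m^'n)"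
        have MV: "Mx x - Mx x0 = (V1, V2, V3)" unfolding Mx_def V1_def V2_def V3_def
          by (simp add: vec_eq_iff)
        have n1: "norm V1 \<le> Mc*\<epsilon>"
        proof -
          have "norm V1 \<le> (\<Sum>j\<in>UNIV. \<bar>V1$j\<bar>)" by (rule norm_le_l1_cart)
          also have "\<dots> \<le> (\<Sum>j\<in>(UNIV::'m set). \<epsilon>)"
          proof (rule sum_mono)
            fix j
            have "V1$j = (\<Sum>i\<in>UNIV. x$i$j) - 1" unfolding V1_def using K4 by simp
            then show "\<bar>V1$j\<bar> \<le> \<epsilon>" using hd by simp
          qed
          also have "\<dots> = Mc*\<epsilon>" unfolding Mc_def by simp
          finally show ?thesis .
        qed
        have n2: "norm V2 \<le> N*(\<epsilon> + (\<epsilon> + T0*q)/cy)"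
        proof -
          have "norm V2 \<le> (\<Sum>i\<in>UNIV. \<bar>V2$i\<bar>)" by (rule norm_le_l1_cart)
          also have "\<dots> \<le> (\<Sum>i\<in>(UNIV::'n set). \<epsilon> + (\<epsilon> + T0*q)/cy)"
          proof (rule sum_mono)
            fix i
            have "t0$i - (\<Sum>j\<in>UNIV. U$i$j * x0$i$j) = 0" using K5 by blast
            then have K5i: "(\<Sum>j\<in>UNIV. U$i$j * x0$i$j) = t0$i" by linarith
            have "V2$i = ((\<Sum>j\<in>UNIV. U$i$j * x$i$j) - t$i) + (t$i - t0$i)" unfolding V2_def using K5i by simp
            moreover have "\<bar>(\<Sum>j\<in>UNIV. U$i$j * x$i$j) - t$i\<bar> \<le> \<epsilon>" using he[rule_format, of i] by (simp add: abs_minus_commute)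
            moreover have "\<bar>t$i - t0$i\<bar> \<le> (\<epsilon> + T0*q)/cy" by (rule dt)
            ultimately show "\<bar>V2$i\<bar> \<le> \<epsilon> + (\<epsilon> + T0*q)/cy"
              using abs_triangle_ineq[of "(\<Sum>j\<in>UNIV. U$i$j * x$i$j) - t$i" "t$i - t0$i"] by linarith
          qed
          also have "\<dots> = N*(\<epsilon> + (\<epsilon> + T0*q)/cy)" unfolding N_def by simp
          finally show ?thesis .
        qed
        have n3: "norm V3 \<le> N*Mc*\<epsilon>"
        proof -
          have "norm V3 \<le> (\<Sum>i\<in>UNIV. \<Sum>j\<in>UNIV. \<bar>V3$i$j\<bar>)" by (rule norm_mat_le)
          also have "\<dots> \<le> (\<Sum>i\<in>(UNIV::'n set). \<Sum>j\<in>(UNIV::'m set). \<epsilon>)"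
          proof (intro sum_mono)
            fix i j
            show "\<bar>V3$i$j\<bar> \<le> \<epsilon>"
            proof (cases "p0$j - U$i$j*y0$i > 0")
              case True
              then show ?thesis unfolding V3_def using offs[OF True] x0off[OF True] by simp
            next
              case False
              then show ?thesis unfolding V3_def using e0 by simp
            qed
          qed
          also have "\<dots> = N*Mc*\<epsilon>" unfolding N_def Mc_def by simp
          finally show ?thesis .
        qed
        have "norm (V1, V2, V3) \<le> norm V1 + norm V2 + norm V3"
          using norm_Pair_le[of V1 "(V2,V3)"] norm_Pair_le[of V2 V3] by linarith
        then show ?thesis unfolding MV using n1 n2 n3 by linarith
      qed
      have x'col: "(\<Sum>i\<in>UNIV. x'$i$j) = 1" for j
      proof -
        have "fst (Mx x') $ j = fst (Mx x0) $ j" using Mxeq by simp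
        then show ?thesis unfolding Mx_def using K4 by simp
      qed
      have x'row: "t0$i - (\<Sum>j\<in>UNIV. U$i$j * x'$i$j) = 0" for i
      proof -
        have "fst (snd (Mx x')) $ i = fst (snd (Mx x0)) $ i" using Mxeq by simp
        then show ?thesis unfolding Mx_def using K5 by simp
      qed
      have x'off: "x'$i$j = 0" if c: "p0$j - U$i$j*y0$i > 0" for i j
      proof -
        have "snd (snd (Mx x')) $ i $ j = snd (snd (Mx x0)) $ i $ j" using Mxeq by simp
        then show ?thesis unfolding Mx_def using c x0off[OF c] by simp
      qed
      have Kz': "(x', t0, p0, y0) \<in> KKT_set w U"
        unfolding KKT_set_def
      proof (simp only: mem_Collect_eq case_prod_conv, intro conjI allI)
        fix i j
        show "x'$i$j * (p0$j - U$i$j * y0$i) = 0"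
        proof (cases "p0$j - U$i$j*y0$i > 0")
          case True then show ?thesis using x'off[OF True] by simp
        next
          case False
          moreover have "p0$j - U$i$j*y0$i \<ge> 0" using K3 by blast
          ultimately have "p0$j - U$i$j*y0$i = 0" by linarith
          then show ?thesis by simp
        qed
      qed (use K1 K3 x'col x'row x'nn in auto)
      define Dz where "Dz = norm ((x,t,p,y) - (x', t0, p0, y0))"
      have nt: "norm (t - t0) \<le> N * ((\<epsilon> + T0*q)/cy)"
      proof -
        have "norm (t - t0) \<le> (\<Sum>i\<in>UNIV. \<bar>(t - t0)$i\<bar>)" by (rule norm_le_l1_cart)
        also have "\<dots> \<le> (\<Sum>i\<in>(UNIV::'n set). (\<epsilon> + T0*q)/cy)" using dt by (intro sum_mono) simp
        also have "\<dots> = N * ((\<epsilon> + T0*q)/cy)" unfolding N_def by simp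
        finally show ?thesis .
      qed
      have np: "norm (p - p0) \<le> Mc * ((\<xi>+1)*\<epsilon> + Ub*q)"
      proof -
        have "norm (p - p0) \<le> (\<Sum>j\<in>UNIV. \<bar>(p - p0)$j\<bar>)" by (rule norm_le_l1_cart)
        also have "\<dots> \<le> (\<Sum>j\<in>(UNIV::'m set). (\<xi>+1)*\<epsilon> + Ub*q)" using dp by (intro sum_mono) simp
        also have "\<dots> = Mc * ((\<xi>+1)*\<epsilon> + Ub*q)" unfolding Mc_def by simp
        finally show ?thesis .
      qed
      have Dz1: "Dz \<le> \<kappa> * (Mc*\<epsilon> + N*(\<epsilon> + (\<epsilon> + T0*q)/cy) + N*Mc*\<epsilon>) + N * ((\<epsilon> + T0*q)/cy) + Mc * ((\<xi>+1)*\<epsilon> + Ub*q) + q"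
      proof -
        have "(x,t,p,y) - (x', t0, p0, y0) = (x - x', t - t0, p - p0, y - y0)" by simp
        then have "Dz \<le> norm (x - x') + norm (t - t0) + norm (p - p0) + norm (y - y0)"
          unfolding Dz_def using norm4(5) by metis
        moreover have "norm (x - x') \<le> \<kappa> * (Mc*\<epsilon> + N*(\<epsilon> + (\<epsilon> + T0*q)/cy) + N*Mc*\<epsilon>)"
          using xd nM \<kappa>pos by (meson mult_left_mono less_imp_le order_trans)
        ultimately show ?thesis using nt np unfolding q_def by linarith
      qed
      have Dz2: "\<kappa> * (Mc*\<epsilon> + N*(\<epsilon> + (\<epsilon> + T0*q)/cy) + N*Mc*\<epsilon>) + N * ((\<epsilon> + T0*q)/cy) + Mc * ((\<xi>+1)*\<epsilon> + Ub*q) + q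
          = A1 * \<epsilon> + B1 * q"
        unfolding A1_def B1_def using cypos by (simp add: field_simps)
      have Dz3: "Dz \<le> C3 * (\<epsilon> + q)"
      proof -
        have "A1 * \<epsilon> \<le> C3 * \<epsilon>" unfolding C3_def using B1nn e0 by (intro mult_right_mono) auto
        moreover have "B1 * q \<le> C3 * q" unfolding C3_def using A1nn q0nn by (intro mult_right_mono) auto
        ultimately show ?thesis using Dz1 Dz2 by (simp add: distrib_left)
      qed
      have "q^2 \<le> K1c * \<epsilon> * Dz" unfolding Dz_def by (rule mono[OF Kz'])
      also have "\<dots> \<le> K1c * \<epsilon> * (C3 * (\<epsilon> + q))" using Dz3 K1pos e0 by (intro mult_left_mono) auto
      also have "\<dots> = (K1c * C3) * \<epsilon> * (\<epsilon> + q)" by (simp add: algebra_simps)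
      finally have qq: "q \<le> (K1c * C3 + 1) * \<epsilon>"
        using quad[OF q0nn e0] K1pos C3nn by simp
      have "infdist (x,t,p,y) (KKT_set w U) \<le> Dz" unfolding Dz_def
        using infdist_le[OF Kz', of "(x,t,p,y)"] by (simp only: dist_norm)
      also have "\<dots> \<le> C3 * (\<epsilon> + (K1c * C3 + 1) * \<epsilon>)" using Dz3 qq C3nn
        by (meson add_left_mono mult_left_mono order_trans)
      also have "\<dots> = Cfin * \<epsilon>" unfolding Cfin_def by (simp add: algebra_simps)
      also have "\<dots> \<le> G * \<epsilon>" unfolding G_def using e0 R0 Z0nn \<epsilon>1pos by (simp add: distrib_right)
      finally show ?thesis unfolding \<epsilon>_def .
    qed
  qed
  show ?thesis
  proof (intro exI[of _ "1/G"] conjI allI impI)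
    show "1/G > 0" using Gpos by simp
    fix z :: "(real^'m^'n) \<times> (real^'n) \<times> (real^'m) \<times> (real^'n)"
    assume "\<forall>i j. (fst z)$i$j \<ge> 0" "norm z \<le> R"
    then obtain x t p y where z: "z = (x,t,p,y)" "\<forall>i j. x$i$j \<ge> 0" "norm (x,t,p,y) \<le> R"
      by (cases z) auto
    have "infdist z (KKT_set w U) \<le> G * norm (F_res \<xi> w U z)" using key z by simp
    then show "1/G * infdist z (KKT_set w U) \<le> norm (F_res \<xi> w U z)" using Gpos
      by (simp add: field_simps)
  qed
qed

end
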